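(* (i) Let $B_1,\dots,B_n$ and $C$ be subspaces of a finite-dimensional vector space $W$ over a finite field and let $\alpha\subseteq\{1,\dots,n\}$. Then there exists a subspace $A$ of $W$ with $H(A)=H(C\mid B_j:j\in\alpha)$ and $H(T_A(C)\mid T_A(B_j):j\in\alpha)=0$. (ii) Let $\{B^i_1,\dots,B^i_n,C^i\}_{i=1}^\infty$ be a sequence of collections of subspaces (for each $i$, of a finite-dimensional vector space $W^i$ over a finite field), let $\alpha\subseteq\{1,\dots,n\}$, and let $k(i)>0$ satisfy $\lim_{i\to\infty}\frac{1}{k(i)}H(C^i\mid B^i_j:j\in\alpha)=0$. Then there exist subspaces $A^i$ of $W^i$ such that for every $i$, $H(A^i)=H(C^i\mid B^i_j:j\in\alpha)$ and $H(T_{A^i}(C^i)\mid T_{A^i}(B^i_j):j\in\alpha)=0$, and for all $\beta\subseteq\{1,\dots,n\}$, $\lim_{i\to\infty}\frac{1}{k(i)}H(T_{A^i}(B^i_j):j\in\beta)=\lim_{i\to\infty}\frac{1}{k(i)}H(B^i_j:j\in\beta)$ (in the sense that if either limit exists then both exist and are equal).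
   Context: For subspaces, $\langle\cdots\rangle$ denotes the span. $H(B_j:j\in\beta)=\dim\langle B_j:j\in\beta\rangle$ and $H(\mathcal{S}\mid\mathcal{R})=\dim\langle\mathcal{S},\mathcal{R}\rangle-\dim\langle\mathcal{R}\rangle$. For a subspace $A$ of $W$, choose any subspace $A^*$ with $\langle A,A^*\rangle=W$ and $A\cap A^*=\{0\}$; for $u=u_1+u_2$ with $u_1\in A^*,u_2\in A$ set $T_A(u)=u_1$, and $T_A(B)=\{T_A(u):u\in B\}$ for a subspace $B$. (The dimensions appearing in the statement do not depend on the choice of $A^*$.) *)

theory Defs
  imports "HOL-Analysis.Analysis"
begin

text \<open>All notions are relative to a scalar multiplication sc of a vector space
  (over a field 'f) on an ambient type 'v; W is a subspace playing the role of the
  finite-dimensional space of the paper.\<close>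

definition finite_dim_subspace :: "('f::field \<Rightarrow> 'v::ab_group_add \<Rightarrow> 'v) \<Rightarrow> 'v set \<Rightarrow> bool" where
  "finite_dim_subspace sc W \<longleftrightarrow>
     module.subspace sc W \<and> (\<exists>S. finite S \<and> module.span sc S = W)"

definition subspace_of :: "('f::field \<Rightarrow> 'v::ab_group_add \<Rightarrow> 'v) \<Rightarrow> 'v set \<Rightarrow> 'v set \<Rightarrow> bool" where
  "subspace_of sc W A \<longleftrightarrow> module.subspace sc A \<and> A \<subseteq> W"

definition Hs :: "('f::field \<Rightarrow> 'v::ab_group_add \<Rightarrow> 'v) \<Rightarrow> ('j \<Rightarrow> 'v set) \<Rightarrow> 'j set \<Rightarrow> nat" where
  "Hs sc B \<beta> = vector_space.dim sc (module.span sc (\<Union>j\<in>\<beta>. B j))"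

definition Hcond :: "('f::field \<Rightarrow> 'v::ab_group_add \<Rightarrow> 'v) \<Rightarrow> 'v set \<Rightarrow> ('j \<Rightarrow> 'v set) \<Rightarrow> 'j set \<Rightarrow> nat" where
  "Hcond sc S B \<beta> =
     vector_space.dim sc (module.span sc (S \<union> (\<Union>j\<in>\<beta>. B j)))
     - vector_space.dim sc (module.span sc (\<Union>j\<in>\<beta>. B j))"

definition is_complement :: "('f::field \<Rightarrow> 'v::ab_group_add \<Rightarrow> 'v) \<Rightarrow> 'v set \<Rightarrow> 'v set \<Rightarrow> 'v set \<Rightarrow> bool" where
  "is_complement sc W A Astar \<longleftrightarrow>
     subspace_of sc W Astar \<and> module.span sc (A \<union> Astar) = W \<and> A \<inter> Astar = {0}"

definition TA :: "'v set \<Rightarrow> 'v set \<Rightarrow> 'v::ab_group_add \<Rightarrow> 'v" where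
  "TA A Astar u = (THE u1. u1 \<in> Astar \<and> u - u1 \<in> A)"

definition TA_set :: "'v set \<Rightarrow> 'v set \<Rightarrow> 'v::ab_group_add set \<Rightarrow> 'v set" where
  "TA_set A Astar B = TA A Astar ` B"

definition same_limit :: "(nat \<Rightarrow> real) \<Rightarrow> (nat \<Rightarrow> real) \<Rightarrow> bool" where
  "same_limit f g \<longleftrightarrow> ((convergent f \<or> convergent g) \<longrightarrow>
       (convergent f \<and> convergent g \<and> lim f = lim g))"

end

theory Submission
  imports Defs
begin

context vector_space
begin

lemma fin_indep:
  assumes "finite S" "B \<subseteq> span S" "independent B"
  shows "finite B"
  using independent_span_bound[OF assms(1,3,2)] by simp

lemma dim_mono_W:
  assumes "finite S" "X \<subseteq> span S" "V \<subseteq> span X"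
  shows "dim V \<le> dim X"
proof -
  obtain B where B: "B \<subseteq> X" "independent B" "X \<subseteq> span B" "card B = dim X"
    using basis_exists by blast
  have "finite B" using fin_indep[OF assms(1) _ B(2)] B(1) assms(2) by blast
  moreover have "V \<subseteq> span B" using assms(3) B(3)
    by (metis span_mono span_span subset_trans)
  ultimately show ?thesis using dim_le_card B(4) by metis
qed

lemma dim_un_W:
  assumes "finite S" "X \<subseteq> span S" "Y \<subseteq> span S"
  shows "dim (X \<union> Y) \<le> dim X + dim Y"
proof -
  obtain B where B: "B \<subseteq> X" "independent B" "X \<subseteq> span B" "card B = dim X"
    using basis_exists by blast
  obtain B' where B': "B' \<subseteq> Y" "independent B'" "Y \<subseteq> span B'" "card B' = dim Y"
    using basis_exists by blast
  have f: "finite B" using fin_indep[OF assms(1) _ B(2)] B(1) assms(2) by blast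
  have f': "finite B'" using fin_indep[OF assms(1) _ B'(2)] B'(1) assms(3) by blast
  have "X \<union> Y \<subseteq> span (B \<union> B')" using B(3) B'(3)
    by (meson Un_upper1 Un_upper2 le_sup_iff span_mono subset_trans)
  then have "dim (X \<union> Y) \<le> card (B \<union> B')" using dim_le_card f f' by blast
  also have "\<dots> \<le> card B + card B'" by (rule card_Un_le)
  finally show ?thesis using B(4) B'(4) by simp
qed

lemma compl_exists:
  assumes "finite S" "X \<subseteq> span S" "Y \<subseteq> span S"
  shows "\<exists>A. subspace A \<and> A \<subseteq> span (X \<union> Y) \<and> dim A = dim (X \<union> Y) - dim Y \<and>
     span (X \<union> Y) \<subseteq> {y + a | y a. y \<in> span Y \<and> a \<in> A}"
proof -
  obtain BY where BY: "BY \<subseteq> Y" "independent BY" "Y \<subseteq> span BY" "card BY = dim Y"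
    using basis_exists by blast
  obtain B where B: "BY \<subseteq> B" "B \<subseteq> X \<union> Y" "independent B" "X \<union> Y \<subseteq> span B"
    using maximal_independent_subset_extend[of BY "X \<union> Y"] BY by blast
  have fB: "finite B" using fin_indep[OF assms(1) _ B(3)] B(2) assms(2,3) by blast
  have cB: "card B = dim (X \<union> Y)" using basis_card_eq_dim B by blast
  define A where "A = span (B - BY)"
  have "subspace A" unfolding A_def by (rule subspace_span)
  moreover have "A \<subseteq> span (X \<union> Y)" unfolding A_def using B(2) by (intro span_mono) blast
  moreover have "dim A = dim (X \<union> Y) - dim Y"
  proof -
    have "independent (B - BY)" using B(3) independent_mono by blast
    then have "dim A = card (B - BY)" unfolding A_def using dim_span_eq_card_independent by blast
    also have "\<dots> = card B - card BY" using fB B(1) by (simp add: card_Diff_subset finite_subset)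
    finally show ?thesis using cB BY(4) by simp
  qed
  moreover have "span (X \<union> Y) \<subseteq> {y + a | y a. y \<in> span Y \<and> a \<in> A}"
  proof -
    have "span (X \<union> Y) \<subseteq> span B" using B(4) by (metis span_mono span_span)
    also have "B \<subseteq> span (Y \<union> A)" 
    proof
      fix b assume "b \<in> B"
      show "b \<in> span (Y \<union> A)"
      proof (cases "b \<in> BY")
        case True then show ?thesis using BY(1) by (meson UnI1 in_mono span_base)
      next
        case False then have "b \<in> A" unfolding A_def using \<open>b \<in> B\<close> by (simp add: span_base)
        then show ?thesis by (simp add: span_base)
      qed
    qed
    then have "span B \<subseteq> span (Y \<union> A)" by (metis span_mono span_span)
    also have "\<dots> = {y + a | y a. y \<in> span Y \<and> a \<in> span A}" by (rule span_Un)
    finally show ?thesis unfolding A_def span_span .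
  qed
  ultimately show ?thesis by blast
qed

lemma TA_unique:
  assumes "subspace A" "subspace As" "A \<inter> As = {0}" "u1 \<in> As" "u - u1 \<in> A"
  shows "TA A As u = u1"
  unfolding TA_def
proof (rule the_equality)
  show "u1 \<in> As \<and> u - u1 \<in> A" using assms by blast
  fix v assume v: "v \<in> As \<and> u - v \<in> A"
  have "u1 - v \<in> As" using v assms(2,4) by (simp add: subspace_diff)
  moreover have "u1 - v \<in> A" using subspace_diff[OF assms(1) v[THEN conjunct2] assms(5)] by simp
  ultimately have "u1 - v \<in> A \<inter> As" by blast
  then have "u1 - v = 0" using assms(3) by blast
  then show "v = u1" by simp
qed

lemma TA_props:
  assumes "subspace A" "subspace As" "A \<inter> As = {0}" "u \<in> span (A \<union> As)"
  shows "TA A As u \<in> As \<and> u - TA A As u \<in> A"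
proof -
  have "span (A \<union> As) = {x + y | x y. x \<in> A \<and> y \<in> As}"
  proof -
    have sA: "span A = A" "span As = As" using assms(1,2) by (simp_all add: span_eq_iff)
    show ?thesis using span_Un[of A As] unfolding sA .
  qed
  then obtain a b where ab: "u = a + b" "a \<in> A" "b \<in> As" using assms(4) by auto
  then have "TA A As u = b" using TA_unique[OF assms(1-3)] by simp
  then show ?thesis using ab by simp
qed

lemma TA_add:
  assumes "subspace A" "subspace As" "A \<inter> As = {0}" "u \<in> span (A \<union> As)" "v \<in> span (A \<union> As)"
  shows "TA A As (u + v) = TA A As u + TA A As v"
proof (rule TA_unique[OF assms(1-3)])
  note p1 = TA_props[OF assms(1-4)] and p2 = TA_props[OF assms(1-3,5)]
  show "TA A As u + TA A As v \<in> As" using p1 p2 assms(2) by (simp add: subspace_add)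
  have eq: "u + v - (TA A As u + TA A As v) = (u - TA A As u) + (v - TA A As v)" by (simp add: algebra_simps)
  show "u + v - (TA A As u + TA A As v) \<in> A" unfolding eq using p1 p2 assms(1) by (simp add: subspace_add)
qed

lemma TA_scale:
  assumes "subspace A" "subspace As" "A \<inter> As = {0}" "u \<in> span (A \<union> As)"
  shows "TA A As (scale c u) = scale c (TA A As u)"
proof (rule TA_unique[OF assms(1-3)])
  note p1 = TA_props[OF assms(1-4)]
  show "scale c (TA A As u) \<in> As" using p1 assms(2) by (simp add: subspace_scale)
  have "scale c u - scale c (TA A As u) = scale c (u - TA A As u)" by (simp add: scale_right_diff_distrib)
  then show "scale c u - scale c (TA A As u) \<in> A" using p1 assms(1) by (simp add: subspace_scale)
qed

lemma TA_zero:
  assumes "subspace A" "subspace As" "A \<inter> As = {0}"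
  shows "TA A As 0 = 0"
  using TA_unique[OF assms, of 0 0] assms(1,2) by (simp add: subspace_0)

lemma TA_shift:
  assumes "subspace A" "subspace As" "A \<inter> As = {0}" "u \<in> span (A \<union> As)" "a \<in> A"
  shows "TA A As (u + a) = TA A As u"
proof (rule TA_unique[OF assms(1-3)])
  note p1 = TA_props[OF assms(1-4)]
  show "TA A As u \<in> As" using p1 by simp
  have eq: "u + a - TA A As u = (u - TA A As u) + a" by (simp add: algebra_simps)
  show "u + a - TA A As u \<in> A" unfolding eq using p1 assms(1,5) by (simp add: subspace_add)
qed

lemma TA_span:
  assumes "subspace A" "subspace As" "A \<inter> As = {0}" "Y \<subseteq> span (A \<union> As)" "u \<in> span Y"
  shows "TA A As u \<in> span (TA A As ` Y)"
proof -
  have sY: "span Y \<subseteq> span (A \<union> As)" using assms(4) by (metis span_mono span_span)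
  have "u \<in> span Y \<longrightarrow> TA A As u \<in> span (TA A As ` Y)"
    using assms(5)
  proof (induction rule: span_induct_alt)
    case base then show ?case using TA_zero[OF assms(1-3)] by (simp add: span_zero)
  next
    case (step c x y)
    show ?case
    proof
      assume "scale c x + y \<in> span Y"
      moreover have "scale c x \<in> span Y" using step(1) by (intro span_scale span_base)
      ultimately have "y \<in> span Y" using span_add_eq by blast
      then have ty: "TA A As y \<in> span (TA A As ` Y)" using step(2) by blast
      have xW: "x \<in> span (A \<union> As)" using step(1) assms(4) by blast
      have yW: "y \<in> span (A \<union> As)" using \<open>y \<in> span Y\<close> sY by blast
      have cxW: "scale c x \<in> span (A \<union> As)" using xW by (simp add: span_scale)
      have "TA A As (scale c x + y) = scale c (TA A As x) + TA A As y"
        using TA_add[OF assms(1-3) cxW yW] TA_scale[OF assms(1-3) xW] by simp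
      moreover have "TA A As x \<in> span (TA A As ` Y)" using step(1) by (simp add: span_base)
      ultimately show "TA A As (scale c x + y) \<in> span (TA A As ` Y)" using ty
        by (simp add: span_add span_scale)
    qed
  qed
  then show ?thesis using assms(5) by blast
qed

lemma TA_dims:
  assumes "finite S" "subspace A" "subspace As" "A \<inter> As = {0}" "span (A \<union> As) = span S"
    "X \<subseteq> span S"
  shows "dim (TA A As ` X) \<le> dim X + dim A \<and> dim X \<le> dim (TA A As ` X) + dim A"
proof -
  have "A \<union> As \<subseteq> span S" unfolding assms(5)[symmetric] by (rule span_superset)
  then have AW: "A \<subseteq> span S" and AsW: "As \<subseteq> span S" by auto
  have p: "\<And>x. x \<in> X \<Longrightarrow> TA A As x \<in> As \<and> x - TA A As x \<in> A"
    using TA_props[OF assms(2-4)] assms(5,6) by blast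
  have TX: "TA A As ` X \<subseteq> span S" using p AsW by blast
  have "TA A As ` X \<subseteq> span (X \<union> A)"
  proof
    fix z assume "z \<in> TA A As ` X"
    then obtain x where x: "x \<in> X" "z = TA A As x" by blast
    have "z = x - (x - TA A As x)" using x by simp
    moreover have "x \<in> span (X \<union> A)" "x - TA A As x \<in> span (X \<union> A)"
      using x p[OF x(1)] by (auto intro: span_base)
    ultimately show "z \<in> span (X \<union> A)" using span_diff by metis
  qed
  moreover have "X \<union> A \<subseteq> span S" using assms(6) AW by simp
  ultimately have "dim (TA A As ` X) \<le> dim (X \<union> A)" using dim_mono_W[OF assms(1)] by presburger
  also have "\<dots> \<le> dim X + dim A" using dim_un_W[OF assms(1) assms(6) AW] .
  finally have 1: "dim (TA A As ` X) \<le> dim X + dim A" .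
  have "X \<subseteq> span (TA A As ` X \<union> A)"
  proof
    fix x assume x: "x \<in> X"
    have "x = TA A As x + (x - TA A As x)" by simp
    moreover have "TA A As x \<in> span (TA A As ` X \<union> A)" "x - TA A As x \<in> span (TA A As ` X \<union> A)"
      using x p[OF x] by (auto intro: span_base)
    ultimately show "x \<in> span (TA A As ` X \<union> A)" by (metis span_add)
  qed
  moreover have "TA A As ` X \<union> A \<subseteq> span S" using TX AW by simp
  ultimately have "dim X \<le> dim (TA A As ` X \<union> A)" using dim_mono_W[OF assms(1)] by presburger
  also have "\<dots> \<le> dim (TA A As ` X) + dim A" using dim_un_W[OF assms(1) TX AW] .
  finally show ?thesis using 1 by simp
qed

end


context vector_space
begin

lemma core:
  assumes W: "finite_dim_subspace scale W" and C: "C \<subseteq> W" and Y: "Y \<subseteq> W"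
  shows "\<exists>A. subspace_of scale W A \<and> dim A = dim (span (C \<union> Y)) - dim (span Y) \<and>
    (\<forall>As. is_complement scale W A As \<longrightarrow>
       span (TA A As ` C \<union> TA A As ` Y) = span (TA A As ` Y))"
proof -
  obtain S where S: "finite S" "span S = W" "subspace W"
    using W unfolding finite_dim_subspace_def by blast
  have C': "C \<subseteq> span S" and Y': "Y \<subseteq> span S" using C Y S(2) by auto
  obtain A where A: "subspace A" "A \<subseteq> span (C \<union> Y)" "dim A = dim (C \<union> Y) - dim Y"
    "span (C \<union> Y) \<subseteq> {y + a | y a. y \<in> span Y \<and> a \<in> A}"
    using compl_exists[OF S(1) C' Y'] by blast
  have "span (C \<union> Y) \<subseteq> W" using C Y S(3) by (simp add: span_minimal)
  then have AW: "A \<subseteq> W" using A(2) by blast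
  have "subspace_of scale W A" unfolding subspace_of_def using A(1) AW by simp
  moreover have "dim A = dim (span (C \<union> Y)) - dim (span Y)" using A(3) by simp
  moreover have "span (TA A As ` C \<union> TA A As ` Y) = span (TA A As ` Y)"
    if c: "is_complement scale W A As" for As
  proof -
    have As: "subspace As" "span (A \<union> As) = W" "A \<inter> As = {0}"
      using c unfolding is_complement_def subspace_of_def by auto
    have YW: "Y \<subseteq> span (A \<union> As)" using Y As(2) by simp
    have sYW: "span Y \<subseteq> span (A \<union> As)" using YW by (metis span_mono span_span)
    have "TA A As ` C \<subseteq> span (TA A As ` Y)"
    proof
      fix z assume "z \<in> TA A As ` C"
      then obtain c where cC: "c \<in> C" "z = TA A As c" by blast
      then have "c \<in> span (C \<union> Y)" by (simp add: span_base)
      then obtain y a where ya: "c = y + a" "y \<in> span Y" "a \<in> A" using A(4) by blast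
      have "TA A As c = TA A As y" using TA_shift[OF A(1) As(1,3) _ ya(3), of y] ya sYW by blast
      moreover have "TA A As y \<in> span (TA A As ` Y)" using TA_span[OF A(1) As(1,3) YW ya(2)] .
      ultimately show "z \<in> span (TA A As ` Y)" using cC by simp
    qed
    then show ?thesis using span_eq by (metis Un_subset_iff span_superset)
  qed
  ultimately show ?thesis by blast
qed

lemma dims_W:
  assumes W: "finite_dim_subspace scale W" and c: "is_complement scale W A As"
    and A: "subspace A" and X: "X \<subseteq> W"
  shows "dim (TA A As ` X) \<le> dim X + dim A \<and> dim X \<le> dim (TA A As ` X) + dim A"
proof -
  obtain S where S: "finite S" "span S = W"
    using W unfolding finite_dim_subspace_def by blast
  have As: "subspace As" "span (A \<union> As) = span S" "A \<inter> As = {0}"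
    using c S(2) unfolding is_complement_def subspace_of_def by auto
  show ?thesis using TA_dims[OF S(1) A As(1) As(3) As(2)] X S(2) by blast
qed

end

lemma same_limit_I:
  fixes f g h :: "nat \<Rightarrow> real"
  assumes b: "\<And>i. \<bar>f i - g i\<bar> \<le> h i" and h: "h \<longlonglongrightarrow> 0"
  shows "same_limit f g"
proof -
  have d: "(\<lambda>i. f i - g i) \<longlonglongrightarrow> 0"
    by (rule Lim_null_comparison[where g=h]) (use b h in auto)
  have 1: "convergent g \<and> lim f = lim g" if cf: "convergent f"
  proof -
    obtain L where L: "f \<longlonglongrightarrow> L" using cf unfolding convergent_def by blast
    have "(\<lambda>i. f i - (f i - g i)) \<longlonglongrightarrow> L - 0" by (intro tendsto_diff L d)
    then have "g \<longlonglongrightarrow> L" by simp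
    then show ?thesis using L by (auto simp: convergent_def limI)
  qed
  have 2: "convergent f \<and> lim f = lim g" if cf: "convergent g"
  proof -
    obtain L where L: "g \<longlonglongrightarrow> L" using cf unfolding convergent_def by blast
    have "(\<lambda>i. g i + (f i - g i)) \<longlonglongrightarrow> L + 0" by (intro tendsto_add L d)
    then have "f \<longlonglongrightarrow> L" by simp
    then show ?thesis using L by (auto simp: convergent_def limI)
  qed
  show ?thesis unfolding same_limit_def using 1 2 by blast
qed

context vector_space
begin

lemma main_lemma:
  shows
  "(\<forall>(W::'b set) (n::nat) (B::nat \<Rightarrow> 'b set) (C::'b set) (\<alpha>::nat set).
      finite_dim_subspace scale W \<and> (\<forall>j\<in>{1..n}. subspace_of scale W (B j)) \<and>
      subspace_of scale W C \<and> \<alpha> \<subseteq> {1..n} \<longrightarrow>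
      (\<exists>A. subspace_of scale W A \<and>
           vector_space.dim scale A = Hcond scale C B \<alpha> \<and>
           (\<forall>Astar. is_complement scale W A Astar \<longrightarrow>
              Hcond scale (TA_set A Astar C) (\<lambda>j. TA_set A Astar (B j)) \<alpha> = 0)))
   \<and>
   (\<forall>(W::nat \<Rightarrow> 'b set) (n::nat) (B::nat \<Rightarrow> nat \<Rightarrow> 'b set) (C::nat \<Rightarrow> 'b set)
      (\<alpha>::nat set) (k::nat \<Rightarrow> real).
      (\<forall>i. finite_dim_subspace scale (W i) \<and>
           (\<forall>j\<in>{1..n}. subspace_of scale (W i) (B i j)) \<and>
           subspace_of scale (W i) (C i) \<and> k i > 0) \<and>
      \<alpha> \<subseteq> {1..n} \<and>
      (\<lambda>i. real (Hcond scale (C i) (B i) \<alpha>) / k i) \<longlonglongrightarrow> 0 \<longrightarrow>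
      (\<exists>A::nat \<Rightarrow> 'b set.
         (\<forall>i. subspace_of scale (W i) (A i) \<and>
              vector_space.dim scale (A i) = Hcond scale (C i) (B i) \<alpha>) \<and>
         (\<forall>Astar::nat \<Rightarrow> 'b set. (\<forall>i. is_complement scale (W i) (A i) (Astar i)) \<longrightarrow>
            (\<forall>i. Hcond scale (TA_set (A i) (Astar i) (C i))
                   (\<lambda>j. TA_set (A i) (Astar i) (B i j)) \<alpha> = 0) \<and>
            (\<forall>\<beta>\<subseteq>{1..n}.
               same_limit
                 (\<lambda>i. real (Hs scale (\<lambda>j. TA_set (A i) (Astar i) (B i j)) \<beta>) / k i)
                 (\<lambda>i. real (Hs scale (B i) \<beta>) / k i)))))"
proof -
  have P1: "\<exists>A. subspace_of scale W A \<and>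
           vector_space.dim scale A = Hcond scale C B \<alpha> \<and>
           (\<forall>Astar. is_complement scale W A Astar \<longrightarrow>
              Hcond scale (TA_set A Astar C) (\<lambda>j. TA_set A Astar (B j)) \<alpha> = 0)"
    if h: "finite_dim_subspace scale W" "\<forall>j\<in>{1..n}. subspace_of scale W (B j)"
      "subspace_of scale W C" "\<alpha> \<subseteq> {1..n}" for W n B C \<alpha>
  proof -
    have CW: "C \<subseteq> W" using h(3) unfolding subspace_of_def by simp
    have YW: "(\<Union>j\<in>\<alpha>. B j) \<subseteq> W"
    proof
      fix x assume "x \<in> (\<Union>j\<in>\<alpha>. B j)"
      then obtain j where j: "j \<in> \<alpha>" "x \<in> B j" by blast
      then have "j \<in> {1..n}" using h(4) by blast
      then have "B j \<subseteq> W" using h(2) unfolding subspace_of_def by blast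
      then show "x \<in> W" using j by blast
    qed
    obtain A where A: "subspace_of scale W A \<and> dim A = dim (span (C \<union> (\<Union>j\<in>\<alpha>. B j))) - dim (span (\<Union>j\<in>\<alpha>. B j)) \<and>
      (\<forall>As. is_complement scale W A As \<longrightarrow>
       span (TA A As ` C \<union> TA A As ` (\<Union>j\<in>\<alpha>. B j)) = span (TA A As ` (\<Union>j\<in>\<alpha>. B j)))"
      using core[OF h(1) CW YW] by (elim exE) (rule that)
    show ?thesis
    proof (intro exI conjI allI impI)
      show "subspace_of scale W A" using A by (elim conjE)
      have "dim A = dim (span (C \<union> (\<Union>j\<in>\<alpha>. B j))) - dim (span (\<Union>j\<in>\<alpha>. B j))" using A by (elim conjE)
      then show "dim A = Hcond scale C B \<alpha>" unfolding Hcond_def .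
      fix As assume c: "is_complement scale W A As"
      have e: "(\<Union>j\<in>\<alpha>. TA A As ` B j) = TA A As ` (\<Union>j\<in>\<alpha>. B j)" by (rule image_UN[symmetric])
      have "span (TA A As ` C \<union> TA A As ` (\<Union>j\<in>\<alpha>. B j)) = span (TA A As ` (\<Union>j\<in>\<alpha>. B j))"
        using A c by blast
      then show "Hcond scale (TA_set A As C) (\<lambda>j. TA_set A As (B j)) \<alpha> = 0"
        unfolding Hcond_def TA_set_def e by simp
    qed
  qed
  show ?thesis
  proof (intro conjI allI impI)
    fix W n B C \<alpha>
    assume "finite_dim_subspace scale W \<and> (\<forall>j\<in>{1..n}. subspace_of scale W (B j)) \<and>
      subspace_of scale W C \<and> \<alpha> \<subseteq> {1..n}"
    then have "finite_dim_subspace scale W" "\<forall>j\<in>{1..n}. subspace_of scale W (B j)"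
      "subspace_of scale W C" "\<alpha> \<subseteq> {1..n}" by simp_all
    then show "\<exists>A. subspace_of scale W A \<and>
           vector_space.dim scale A = Hcond scale C B \<alpha> \<and>
           (\<forall>Astar. is_complement scale W A Astar \<longrightarrow>
              Hcond scale (TA_set A Astar C) (\<lambda>j. TA_set A Astar (B j)) \<alpha> = 0)"
      by (rule P1)
  next
    fix W :: "nat \<Rightarrow> 'b set" and n and B :: "nat \<Rightarrow> nat \<Rightarrow> 'b set" and C :: "nat \<Rightarrow> 'b set"
      and \<alpha> :: "nat set" and k :: "nat \<Rightarrow> real"
    assume H: "(\<forall>i. finite_dim_subspace scale (W i) \<and>
           (\<forall>j\<in>{1..n}. subspace_of scale (W i) (B i j)) \<and>
           subspace_of scale (W i) (C i) \<and> k i > 0) \<and>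
      \<alpha> \<subseteq> {1..n} \<and>
      (\<lambda>i. real (Hcond scale (C i) (B i) \<alpha>) / k i) \<longlonglongrightarrow> 0"
    have "\<forall>i. \<exists>A. subspace_of scale (W i) A \<and>
           vector_space.dim scale A = Hcond scale (C i) (B i) \<alpha> \<and>
           (\<forall>Astar. is_complement scale (W i) A Astar \<longrightarrow>
              Hcond scale (TA_set A Astar (C i)) (\<lambda>j. TA_set A Astar (B i j)) \<alpha> = 0)"
    proof
      fix i
      have "finite_dim_subspace scale (W i)" "\<forall>j\<in>{1..n}. subspace_of scale (W i) (B i j)"
        "subspace_of scale (W i) (C i)" "\<alpha> \<subseteq> {1..n}" using H by auto
      from P1[OF this] show "\<exists>A. subspace_of scale (W i) A \<and>
           vector_space.dim scale A = Hcond scale (C i) (B i) \<alpha> \<and>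
           (\<forall>Astar. is_complement scale (W i) A Astar \<longrightarrow>
              Hcond scale (TA_set A Astar (C i)) (\<lambda>j. TA_set A Astar (B i j)) \<alpha> = 0)" .
    qed
    then have "\<exists>A. \<forall>i. subspace_of scale (W i) (A i) \<and>
           vector_space.dim scale (A i) = Hcond scale (C i) (B i) \<alpha> \<and>
           (\<forall>Astar. is_complement scale (W i) (A i) Astar \<longrightarrow>
              Hcond scale (TA_set (A i) Astar (C i)) (\<lambda>j. TA_set (A i) Astar (B i j)) \<alpha> = 0)"
      by (rule choice)
    then obtain A where A: "\<forall>i. subspace_of scale (W i) (A i) \<and>
           vector_space.dim scale (A i) = Hcond scale (C i) (B i) \<alpha> \<and>
           (\<forall>Astar. is_complement scale (W i) (A i) Astar \<longrightarrow>
              Hcond scale (TA_set (A i) Astar (C i)) (\<lambda>j. TA_set (A i) Astar (B i j)) \<alpha> = 0)"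
      by (elim exE) (rule that)
    show "\<exists>A::nat \<Rightarrow> 'b set.
         (\<forall>i. subspace_of scale (W i) (A i) \<and>
              vector_space.dim scale (A i) = Hcond scale (C i) (B i) \<alpha>) \<and>
         (\<forall>Astar::nat \<Rightarrow> 'b set. (\<forall>i. is_complement scale (W i) (A i) (Astar i)) \<longrightarrow>
            (\<forall>i. Hcond scale (TA_set (A i) (Astar i) (C i))
                   (\<lambda>j. TA_set (A i) (Astar i) (B i j)) \<alpha> = 0) \<and>
            (\<forall>\<beta>\<subseteq>{1..n}.
               same_limit
                 (\<lambda>i. real (Hs scale (\<lambda>j. TA_set (A i) (Astar i) (B i j)) \<beta>) / k i)
                 (\<lambda>i. real (Hs scale (B i) \<beta>) / k i)))"
    proof (rule exI[of _ A], intro conjI allI impI)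
      fix i show "subspace_of scale (W i) (A i)" "dim (A i) = Hcond scale (C i) (B i) \<alpha>" using spec[OF A, of i] by simp_all
    next
      fix Astar :: "nat \<Rightarrow> 'b set" and i
      assume c: "\<forall>i. is_complement scale (W i) (A i) (Astar i)"
      show "Hcond scale (TA_set (A i) (Astar i) (C i)) (\<lambda>j. TA_set (A i) (Astar i) (B i j)) \<alpha> = 0"
      proof -
        have ci: "is_complement scale (W i) (A i) (Astar i)" using c by (rule spec)
        have "\<forall>Astar. is_complement scale (W i) (A i) Astar \<longrightarrow>
              Hcond scale (TA_set (A i) Astar (C i)) (\<lambda>j. TA_set (A i) Astar (B i j)) \<alpha> = 0"
          using spec[OF A, of i] by (elim conjE)
        then show ?thesis using ci by (elim allE impE)
      qed
    next
      fix Astar :: "nat \<Rightarrow> 'b set" and \<beta>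
      assume c: "\<forall>i. is_complement scale (W i) (A i) (Astar i)" and \<beta>: "\<beta> \<subseteq> {1..n}"
      show "same_limit
                 (\<lambda>i. real (Hs scale (\<lambda>j. TA_set (A i) (Astar i) (B i j)) \<beta>) / k i)
                 (\<lambda>i. real (Hs scale (B i) \<beta>) / k i)"
      proof (rule same_limit_I[where h="\<lambda>i. real (Hcond scale (C i) (B i) \<alpha>) / k i"])
        show "(\<lambda>i. real (Hcond scale (C i) (B i) \<alpha>) / k i) \<longlonglongrightarrow> 0" using H by (elim conjE)
        fix i
        have Hi: "finite_dim_subspace scale (W i) \<and>
           (\<forall>j\<in>{1..n}. subspace_of scale (W i) (B i j)) \<and>
           subspace_of scale (W i) (C i) \<and> k i > 0" using spec[OF conjunct1[OF H], of i] .
        have kp: "k i > 0" using Hi by (elim conjE)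
        have Ai: "subspace_of scale (W i) (A i) \<and> vector_space.dim scale (A i) = Hcond scale (C i) (B i) \<alpha>"
          using spec[OF A, of i] by (elim conjE) (rule conjI)
        have sA: "subspace (A i)" using Ai unfolding subspace_of_def by (elim conjE)
        have dA: "dim (A i) = Hcond scale (C i) (B i) \<alpha>" using Ai by (elim conjE)
        have XW: "(\<Union>j\<in>\<beta>. B i j) \<subseteq> W i"
        proof
          fix x assume "x \<in> (\<Union>j\<in>\<beta>. B i j)"
          then obtain j where j: "j \<in> \<beta>" "x \<in> B i j" by blast
          then have "j \<in> {1..n}" using \<beta> by blast
          then have "subspace_of scale (W i) (B i j)" using Hi by (elim conjE) (rule bspec)
          then show "x \<in> W i" using j unfolding subspace_of_def by blast
        qed
        have e1: "Hs scale (\<lambda>j. TA_set (A i) (Astar i) (B i j)) \<beta> = dim (TA (A i) (Astar i) ` (\<Union>j\<in>\<beta>. B i j))"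
          unfolding Hs_def TA_set_def image_UN by simp
        have e2: "Hs scale (B i) \<beta> = dim (\<Union>j\<in>\<beta>. B i j)" unfolding Hs_def by simp
        have ineq: "\<bar>real (Hs scale (\<lambda>j. TA_set (A i) (Astar i) (B i j)) \<beta>) - real (Hs scale (B i) \<beta>)\<bar>
             \<le> real (Hcond scale (C i) (B i) \<alpha>)"
        proof -
          have fW: "finite_dim_subspace scale (W i)" using Hi by (elim conjE)
          have ci: "is_complement scale (W i) (A i) (Astar i)" using c by (rule spec)
          have dd: "dim (TA (A i) (Astar i) ` (\<Union>j\<in>\<beta>. B i j)) \<le> dim (\<Union>j\<in>\<beta>. B i j) + dim (A i) \<and>
                dim (\<Union>j\<in>\<beta>. B i j) \<le> dim (TA (A i) (Astar i) ` (\<Union>j\<in>\<beta>. B i j)) + dim (A i)"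
            by (rule dims_W[OF fW ci sA XW])
          then have "real (dim (TA (A i) (Astar i) ` (\<Union>j\<in>\<beta>. B i j))) \<le> real (dim (\<Union>j\<in>\<beta>. B i j)) + real (dim (A i))"
             "real (dim (\<Union>j\<in>\<beta>. B i j)) \<le> real (dim (TA (A i) (Astar i) ` (\<Union>j\<in>\<beta>. B i j))) + real (dim (A i))"
            by (simp_all only: of_nat_add[symmetric] of_nat_le_iff)
          then show ?thesis unfolding e1 e2 dA[symmetric] by (simp only: abs_le_iff) linarith
        qed
        have "\<bar>real (Hs scale (\<lambda>j. TA_set (A i) (Astar i) (B i j)) \<beta>) / k i - real (Hs scale (B i) \<beta>) / k i\<bar>
           = \<bar>real (Hs scale (\<lambda>j. TA_set (A i) (Astar i) (B i j)) \<beta>) - real (Hs scale (B i) \<beta>)\<bar> / k i"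
          using kp by (metis abs_divide abs_of_pos diff_divide_distrib)
        also have "\<dots> \<le> real (Hcond scale (C i) (B i) \<alpha>) / k i"
          using ineq kp by (simp add: divide_right_mono)
        finally show "\<bar>real (Hs scale (\<lambda>j. TA_set (A i) (Astar i) (B i j)) \<beta>) / k i - real (Hs scale (B i) \<beta>) / k i\<bar>
           \<le> real (Hcond scale (C i) (B i) \<alpha>) / k i" .
      qed
    qed
  qed
qed


end

theorem lemma4:
  fixes sc :: "'f::{field,finite} \<Rightarrow> 'v::ab_group_add \<Rightarrow> 'v"
  assumes "vector_space sc"
  shows
  "(\<forall>(W::'v set) (n::nat) (B::nat \<Rightarrow> 'v set) (C::'v set) (\<alpha>::nat set).
      finite_dim_subspace sc W \<and> (\<forall>j\<in>{1..n}. subspace_of sc W (B j)) \<and>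
      subspace_of sc W C \<and> \<alpha> \<subseteq> {1..n} \<longrightarrow>
      (\<exists>A. subspace_of sc W A \<and>
           vector_space.dim sc A = Hcond sc C B \<alpha> \<and>
           (\<forall>Astar. is_complement sc W A Astar \<longrightarrow>
              Hcond sc (TA_set A Astar C) (\<lambda>j. TA_set A Astar (B j)) \<alpha> = 0)))
   \<and>
   (\<forall>(W::nat \<Rightarrow> 'v set) (n::nat) (B::nat \<Rightarrow> nat \<Rightarrow> 'v set) (C::nat \<Rightarrow> 'v set)
      (\<alpha>::nat set) (k::nat \<Rightarrow> real).
      (\<forall>i. finite_dim_subspace sc (W i) \<and>
           (\<forall>j\<in>{1..n}. subspace_of sc (W i) (B i j)) \<and>
           subspace_of sc (W i) (C i) \<and> k i > 0) \<and>
      \<alpha> \<subseteq> {1..n} \<and>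
      (\<lambda>i. real (Hcond sc (C i) (B i) \<alpha>) / k i) \<longlonglongrightarrow> 0 \<longrightarrow>
      (\<exists>A::nat \<Rightarrow> 'v set.
         (\<forall>i. subspace_of sc (W i) (A i) \<and>
              vector_space.dim sc (A i) = Hcond sc (C i) (B i) \<alpha>) \<and>
         (\<forall>Astar::nat \<Rightarrow> 'v set. (\<forall>i. is_complement sc (W i) (A i) (Astar i)) \<longrightarrow>
            (\<forall>i. Hcond sc (TA_set (A i) (Astar i) (C i))
                   (\<lambda>j. TA_set (A i) (Astar i) (B i j)) \<alpha> = 0) \<and>
            (\<forall>\<beta>\<subseteq>{1..n}.
               same_limit
                 (\<lambda>i. real (Hs sc (\<lambda>j. TA_set (A i) (Astar i) (B i j)) \<beta>) / k i)
                 (\<lambda>i. real (Hs sc (B i) \<beta>) / k i)))))"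
  using vector_space.main_lemma[OF assms] .

end
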